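(* Let $q=2^m$ with $m$ a positive integer, let $b\in\mathbb{F}_q^*$ and $\delta\in\mathbb{F}_{q^2}\setminus\mathbb{F}_q$. Put $$A=b\,\mathrm{Tr}_{q^2/q}(\delta),\quad B=b\,\delta^{2q+2}\mathrm{Tr}_{q^2/q}(\delta),\quad C=\mathrm{Tr}_{q^2/q}(\delta)^2,\quad D=1/A,$$ and define $S_{-1}=0$, $S_0=1$, $S_i=C^{2^{i-1}}S_{i-1}+D^{2^{i-1}}S_{i-2}$ for $i\geq1$. If the polynomial $$P(x)=b(x^q+x+\delta)^{2q+3}+x$$ permutes $\mathbb{F}_{q^2}$, then its compositional inverse over $\mathbb{F}_{q^2}$ is $$P^{-1}(x)=x+b\left(\delta+\sum_{i=0}^{m-1}\left(D^{2^i}S_{m-2-i}^{2^{i+1}}+D^{1-2^{i}}S_i\right)\left(x^q+x+B\right)^{2^i}\right)^{2q+3}.$$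
   Context: $\mathrm{Tr}_{q^2/q}(y)=y+y^q$. The compositional inverse of a permutation polynomial $f$ of $\mathbb{F}_{Q}$ is the unique polynomial $f^{-1}$ (modulo $x^Q-x$) with $f(f^{-1}(c))=f^{-1}(f(c))=c$ for all $c\in\mathbb{F}_Q$. *)

theory Defs
  imports Complex_Main
begin

definition trq :: "nat \<Rightarrow> 'a::field \<Rightarrow> 'a" where
  "trq q y = y + y ^ q"

text \<open>Shifted sequence: Sseq C D n = S_{n-1}, so Sseq 0 = S_{-1} = 0, Sseq 1 = S_0 = 1,
  and S_i = C^(2^(i-1)) S_{i-1} + D^(2^(i-1)) S_{i-2} for i >= 1.\<close>
fun Sseq :: "'a::field \<Rightarrow> 'a \<Rightarrow> nat \<Rightarrow> 'a" where
  "Sseq C D 0 = 0"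
| "Sseq C D (Suc 0) = 1"
| "Sseq C D (Suc (Suc n)) = C ^ (2 ^ n) * Sseq C D (Suc n) + D ^ (2 ^ n) * Sseq C D n"

end

theory Submission
  imports Defs "HOL-Computational_Algebra.Polynomial"
begin


lemma c2_add_self: assumes "(2::'a::field) = 0" shows "(x::'a) + x = 0"
  by (metis assms mult_2 mult_zero_left)

lemma c2_minus: assumes "(2::'a::field) = 0" shows "- (x::'a) = x"
  using c2_add_self[OF assms, of x] by (simp add: add_eq_0_iff)

lemma c2_sq_add: assumes "(2::'a::field) = 0" shows "((x::'a) + y)^2 = x^2 + y^2"
proof -
  have "(x+y)^2 = x^2 + y^2 + 2*x*y" by (simp add: power2_eq_square algebra_simps)
  thus ?thesis using assms by simp
qed

lemma c2_pow2_add: assumes "(2::'a::field) = 0" shows "((x::'a) + y)^(2^k) = x^(2^k) + y^(2^k)"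
proof (induction k)
  case 0 then show ?case by simp
next
  case (Suc k)
  have "(x+y)^(2^Suc k) = ((x+y)^(2^k))^2" by (simp add: power_mult[symmetric] mult.commute)
  also have "\<dots> = (x^(2^k))^2 + (y^(2^k))^2" using Suc c2_sq_add[OF assms] by simp
  also have "\<dots> = x^(2^Suc k) + y^(2^Suc k)" by (simp add: power_mult[symmetric] mult.commute)
  finally show ?case .
qed

lemma c2_pow2_sum: assumes "(2::'a::field) = 0" shows "(\<Sum>i\<in>I. (f i::'a))^(2^k) = (\<Sum>i\<in>I. f i ^(2^k))"
proof (induction I rule: infinite_finite_induct)
  case (infinite A) then show ?case by simp
next
  case empty then show ?case by simp
next
  case (insert x F) then show ?case by (simp add: c2_pow2_add[OF assms])
qed

lemma pow_pow2: "((x::'a::field)^(2^a))^(2^b) = x^(2^(a+b))"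
  by (simp add: power_mult[symmetric] power_add)

lemma Sseq_pow: fixes C D :: "'a::field" assumes "(2::'a) = 0"
  shows "(Sseq C D (n+2))^(2^j) = C^(2^(j+n)) * (Sseq C D (n+1))^(2^j) + D^(2^(j+n)) * (Sseq C D n)^(2^j)"
proof -
  have "Sseq C D (n+2) = C^(2^n) * Sseq C D (n+1) + D^(2^n) * Sseq C D n"
    by (simp add: numeral_2_eq_2)
  hence "(Sseq C D (n+2))^(2^j) = (C^(2^n) * Sseq C D (n+1))^(2^j) + (D^(2^n) * Sseq C D n)^(2^j)"
    using c2_pow2_add[OF assms] by metis
  hence "(Sseq C D (n+2))^(2^j) = (C^(2^n))^(2^j) * (Sseq C D (n+1))^(2^j) + (D^(2^n))^(2^j) * (Sseq C D n)^(2^j)"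
    by (simp only: power_mult_distrib)
  thus ?thesis by (simp add: pow_pow2 add.commute)
qed

lemma casor: fixes C D :: "'a::field"
  assumes c2: "(2::'a) = 0"
    and hF: "\<And>n. F (n+2) = C^(2^(j+n)) * F (n+1) + D^(2^(j+n)) * (F n::'a)"
    and hG: "\<And>n. G (n+2) = C^(2^(j+n)) * G (n+1) + D^(2^(j+n)) * (G n::'a)"
  shows "F (n+1) * G n + F n * G (n+1) = D^(2^j * (2^n - 1)) * (F 1 * G 0 + F 0 * G 1)"
proof (induction n)
  case 0 then show ?case by simp
next
  case (Suc n)
  have e: "(2::nat)^j * (2^(Suc n) - 1) = 2^j * (2^n - 1) + 2^(j+n)"
  proof -
    have "(2::nat)^(Suc n) - 1 = (2^n - 1) + 2^n" using one_le_power[of 2 n] by simp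
    thus ?thesis by (simp add: algebra_simps power_add)
  qed
  have "F (Suc n + 1) * G (Suc n) + F (Suc n) * G (Suc n + 1)
      = (C^(2^(j+n)) * F (n+1) + D^(2^(j+n)) * F n) * G (n+1) + F (n+1) * (C^(2^(j+n)) * G (n+1) + D^(2^(j+n)) * G n)"
    using hF[of n] hG[of n] by (simp add: numeral_2_eq_2)
  also have "\<dots> = 2 * (C^(2^(j+n)) * F (n+1) * G (n+1)) + D^(2^(j+n)) * (F (n+1) * G n + F n * G (n+1))"
    by (simp add: algebra_simps)
  also have "\<dots> = D^(2^(j+n)) * (F (n+1) * G n + F n * G (n+1))" using c2 by simp
  also have "\<dots> = D^(2^(j+n)) * (D^(2^j * (2^n - 1)) * (F 1 * G 0 + F 0 * G 1))"
    using Suc by simp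
  also have "\<dots> = D^(2^j * (2^(Suc n) - 1)) * (F 1 * G 0 + F 0 * G 1)"
  proof -
    have "D^(2^j * (2^(Suc n) - 1)) = D^(2^j * (2^n - 1)) * D^(2^(j+n))" by (simp only: e power_add)
    thus ?thesis by (simp add: ac_simps)
  qed
  finally show ?case .
qed

lemma front_aux: fixes C D :: "'a::field" assumes c2: "(2::'a) = 0"
  shows "Sseq C D (k+2) = C * Sseq C D (k+1)^2 + D^2 * Sseq C D k ^4 \<and>
         Sseq C D (k+3) = C * Sseq C D (k+2)^2 + D^2 * Sseq C D (k+1) ^4"
proof (induction k)
  case 0
  have "Sseq C D 3 = C^2 * C + D^2" by (simp add: numeral_3_eq_3)
  then show ?case by (simp add: numeral_2_eq_2 numeral_3_eq_3 power2_eq_square)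
next
  case (Suc k)
  let ?S = "Sseq C D"
  have r: "?S (k+4) = C^(2^(k+2)) * ?S (k+3) + D^(2^(k+2)) * ?S (k+2)"
  proof -
    have "k+4 = Suc(Suc(k+2))" "k+3 = Suc(k+2)" by simp_all
    then show ?thesis by (simp only:) (rule Sseq.simps(3))
  qed
  have s1: "?S (k+3)^2 = C^(2^(k+2)) * ?S (k+2)^2 + D^(2^(k+2)) * ?S (k+1)^2"
  proof -
    have "k+1+2 = k+3" "1+(k+1) = k+2" "k+1+1 = k+2" "(2::nat)^1 = 2" by simp_all
    with Sseq_pow[OF c2, of C D "k+1" 1] show ?thesis by (simp only:)
  qed
  have s2: "?S (k+2)^4 = C^(2^(k+2)) * ?S (k+1)^4 + D^(2^(k+2)) * ?S k^4"
  proof -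
    have "2+k = k+2" "k+1 = k+1" "(2::nat)^2 = 4" by simp_all
    with Sseq_pow[OF c2, of C D "k" 2] show ?thesis by (simp only:)
  qed
  have new: "?S (k+4) = C * ?S (k+3)^2 + D^2 * ?S (k+2)^4"
    unfolding r s1 s2 using Suc by (simp del: Sseq.simps add: algebra_simps)
  have n: "Suc k = k + 1" "k + 1 + 2 = k+3" "k+1 + 3 = k+4" "k+1 + 1 = k+2" by simp_all
  show ?case unfolding n using Suc.IH new by blast
qed

lemma front: fixes C D :: "'a::field" assumes c2: "(2::'a) = 0"
  shows "Sseq C D (k+2) = C * Sseq C D (k+1)^2 + D^2 * Sseq C D k ^4"
  using front_aux[OF c2] by blast



definition Gs :: "'a::field \<Rightarrow> 'a \<Rightarrow> 'a \<Rightarrow> nat \<Rightarrow> 'a" where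
  "Gs C D s n = (\<Sum>i<n. s^(2^i) * Sseq C D (n-i)^(2^(i+1)))"

lemma Grec: fixes C D s :: "'a::field" assumes c2: "(2::'a) = 0"
  shows "Gs C D s (n+2) = C^(2^(n+1)) * Gs C D s (n+1) + D^(2^(n+1)) * Gs C D s n + s^(2^(n+1))"
proof -
  let ?S = "Sseq C D"
  have t: "\<And>i. i < n \<Longrightarrow> s^(2^i) * ?S (n+2-i)^(2^(i+1)) =
      C^(2^(n+1)) * (s^(2^i) * ?S (n+1-i)^(2^(i+1))) + D^(2^(n+1)) * (s^(2^i) * ?S (n-i)^(2^(i+1)))"
  proof -
    fix i assume "i < n"
    have a: "n+2-i = (n-i)+2" "n+1-i = (n-i)+1" "(i+1)+(n-i) = n+1" using \<open>i<n\<close> by simp_all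
    have "?S ((n-i)+2)^(2^(i+1)) = C^(2^((i+1)+(n-i))) * ?S ((n-i)+1)^(2^(i+1)) + D^(2^((i+1)+(n-i))) * ?S (n-i)^(2^(i+1))"
      by (rule Sseq_pow[OF c2])
    hence "?S (n+2-i)^(2^(i+1)) = C^(2^(n+1)) * ?S (n+1-i)^(2^(i+1)) + D^(2^(n+1)) * ?S (n-i)^(2^(i+1))"
      by (simp only: a)
    thus "s^(2^i) * ?S (n+2-i)^(2^(i+1)) =
      C^(2^(n+1)) * (s^(2^i) * ?S (n+1-i)^(2^(i+1))) + D^(2^(n+1)) * (s^(2^i) * ?S (n-i)^(2^(i+1)))"
      by (simp add: algebra_simps)
  qed
  have S2: "?S 2 = C" by (simp add: numeral_2_eq_2)
  have "Gs C D s (n+2) = (\<Sum>i<n. s^(2^i) * ?S (n+2-i)^(2^(i+1))) + s^(2^n) * ?S 2 ^(2^(n+1)) + s^(2^(n+1))"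
    unfolding Gs_def by (simp add: numeral_2_eq_2)
  also have "(\<Sum>i<n. s^(2^i) * ?S (n+2-i)^(2^(i+1))) =
     C^(2^(n+1)) * (\<Sum>i<n. s^(2^i) * ?S (n+1-i)^(2^(i+1))) + D^(2^(n+1)) * Gs C D s n"
  proof -
    have "(\<Sum>i<n. s^(2^i) * ?S (n+2-i)^(2^(i+1))) = (\<Sum>i<n.
      C^(2^(n+1)) * (s^(2^i) * ?S (n+1-i)^(2^(i+1))) + D^(2^(n+1)) * (s^(2^i) * ?S (n-i)^(2^(i+1))))"
      by (rule sum.cong[OF refl]) (rule t, simp)
    thus ?thesis by (simp only: sum.distrib sum_distrib_left Gs_def)
  qed
  also have "Gs C D s (n+1) = (\<Sum>i<n. s^(2^i) * ?S (n+1-i)^(2^(i+1))) + s^(2^n)"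
    unfolding Gs_def by simp
  ultimately show ?thesis by (simp add: S2 algebra_simps)
qed

lemma yiter_aux: fixes C D s t :: "'a::field" assumes c2: "(2::'a) = 0"
  and hs: "s = t^4 + C*t^2 + D*t"
  shows "t^(2^(n+1)) = Sseq C D (n+1) * t^2 + D * Sseq C D n ^2 * t + Gs C D s n \<and>
         t^(2^(n+2)) = Sseq C D (n+2) * t^2 + D * Sseq C D (n+1) ^2 * t + Gs C D s (n+1)"
proof (induction n)
  case 0
  have "t^(2^2) = t^4" by simp
  then show ?case using hs c2_add_self[OF c2] by (simp add: Gs_def numeral_2_eq_2 algebra_simps c2_minus[OF c2] c2)
next
  case (Suc n)
  let ?S = "Sseq C D"
  have u: "t^(2^(n+3)) = C^(2^(n+1)) * t^(2^(n+2)) + D^(2^(n+1)) * t^(2^(n+1)) + s^(2^(n+1))"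
  proof -
    have "s^(2^(n+1)) = (t^4)^(2^(n+1)) + (C*t^2)^(2^(n+1)) + (D*t)^(2^(n+1))"
      unfolding hs by (simp only: c2_pow2_add[OF c2])
    also have "\<dots> = t^(2^(n+3)) + C^(2^(n+1)) * t^(2^(n+2)) + D^(2^(n+1)) * t^(2^(n+1))"
      by (simp add: power_mult_distrib power_mult[symmetric] power_add mult.commute)
    finally have "s^(2^(n+1)) = t^(2^(n+3)) + C^(2^(n+1)) * t^(2^(n+2)) + D^(2^(n+1)) * t^(2^(n+1))" .
    hence "t^(2^(n+3)) = s^(2^(n+1)) - C^(2^(n+1)) * t^(2^(n+2)) - D^(2^(n+1)) * t^(2^(n+1))"
      by (simp add: algebra_simps)
    thus ?thesis by (simp add: c2_minus[OF c2] diff_conv_add_uminus algebra_simps)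
  qed
  have r3: "?S (n+3) = C^(2^(n+1)) * ?S (n+2) + D^(2^(n+1)) * ?S (n+1)"
  proof -
    have "n+3 = Suc (Suc (n+1))" "n+2 = Suc (n+1)" by simp_all
    then show ?thesis by (simp only:) (rule Sseq.simps(3))
  qed
  have r2: "?S (n+2)^2 = C^(2^(n+1)) * ?S (n+1)^2 + D^(2^(n+1)) * ?S n^2"
  proof -
    have "1+n = n+1" "(2::nat)^1 = 2" by simp_all
    with Sseq_pow[OF c2, of C D n 1] show ?thesis by (simp only:)
  qed
  have g: "Gs C D s (n+2) = C^(2^(n+1)) * Gs C D s (n+1) + D^(2^(n+1)) * Gs C D s n + s^(2^(n+1))"
    by (rule Grec[OF c2])
  have "t^(2^(n+3)) = ?S (n+3) * t^2 + D * ?S (n+2)^2 * t + Gs C D s (n+2)"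
    unfolding u r3 r2 g using Suc.IH by (simp add: algebra_simps)
  moreover have "Suc n + 1 = n + 2" "Suc n + 2 = n + 3" "Suc n = n+1" by simp_all
  ultimately show ?case using Suc.IH by (simp only:)
qed

lemma yiter: fixes C D s t :: "'a::field" assumes c2: "(2::'a) = 0"
  and hs: "s = t^4 + C*t^2 + D*t"
  shows "t^(2^(n+1)) = Sseq C D (n+1) * t^2 + D * Sseq C D n ^2 * t + Gs C D s n"
  using yiter_aux[OF c2 hs] by blast



lemma char2_of_card: assumes "card (UNIV::'a::{field,finite} set) = 2^k" "k > 0"
  shows "(2::'a) = 0"
proof -
  have inj: "inj (\<lambda>y::'a. y + 1)" by (simp add: inj_def)
  have im: "(\<lambda>y::'a. y + 1) ` UNIV = UNIV"
    by (metis diff_add_cancel rangeI surj_def)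
  have "(\<Sum>y\<in>(UNIV::'a set). y) = (\<Sum>y\<in>(\<lambda>y::'a. y + 1) ` UNIV. y)" by (simp only: im)
  also have "\<dots> = (\<Sum>y\<in>(UNIV::'a set). y + 1)"
  proof -
    have "sum (\<lambda>y. y) ((\<lambda>y::'a. y + 1) ` UNIV) = sum ((\<lambda>y. y) \<circ> (\<lambda>y::'a. y + 1)) UNIV"
      by (rule sum.reindex[OF inj])
    thus ?thesis by (simp only: comp_def)
  qed
  also have "\<dots> = (\<Sum>y\<in>(UNIV::'a set). y) + of_nat (card (UNIV::'a set))" by (simp add: sum.distrib)
  finally have "of_nat (card (UNIV::'a set)) = (0::'a)" by simp
  hence "(2::'a)^k = 0" using assms(1) by simp
  thus ?thesis by simp
qed

lemma fermat_card: "(x::'a::{field,finite}) ^ card (UNIV::'a set) = x"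
proof (cases "x = 0")
  case True
  have "card (UNIV::'a set) > 0" by (simp add: finite_UNIV_card_ge_0)
  then show ?thesis using True by (simp add: zero_power)
next
  case False
  let ?U = "UNIV - {0::'a}"
  have inj: "inj_on (\<lambda>y. x * y) ?U" using False by (simp add: inj_on_def)
  have im: "(\<lambda>y. x * y) ` ?U = ?U"
  proof
    show "(\<lambda>y. x * y) ` ?U \<subseteq> ?U" using False by auto
    show "?U \<subseteq> (\<lambda>y. x * y) ` ?U"
    proof
      fix z assume "z \<in> ?U"
      hence "z = x * (z / x)" "z / x \<in> ?U" using False by auto
      thus "z \<in> (\<lambda>y. x * y) ` ?U" by blast
    qed
  qed
  have "prod id ?U = prod id ((\<lambda>y. x * y) ` ?U)" by (simp only: im)
  also have "\<dots> = prod (\<lambda>y. x * y) ?U" by (simp add: prod.reindex[OF inj])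
  also have "\<dots> = x ^ card ?U * prod id ?U" by (simp add: prod.distrib)
  finally have e: "prod id ?U = x ^ card ?U * prod id ?U" .
  have "prod id ?U \<noteq> 0" by (simp add: prod_zero_iff)
  with e have "x ^ card ?U = 1" by simp
  moreover have "card ?U = card (UNIV::'a set) - 1" by (simp add: card_Diff_singleton)
  moreover have "card (UNIV::'a set) > 0" by (simp add: finite_UNIV_card_ge_0)
  ultimately show ?thesis by (metis One_nat_def Suc_pred mult.right_neutral power_Suc)
qed

lemma root_bound:
  fixes a :: "nat \<Rightarrow> 'a::{field,finite}" and K :: "'a set"
  assumes h: "\<And>s. s \<in> K \<Longrightarrow> (\<Sum>i<m. a i * s^(2^i)) = 0" and c: "card K \<ge> 2^m"
    and j: "j < m"
  shows "a j = 0"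
proof -
  define p where "p = (\<Sum>i<m. monom (a i) (2^i))"
  have ev: "poly p s = (\<Sum>i<m. a i * s^(2^i))" for s
    unfolding p_def by (simp add: poly_sum poly_monom)
  have co: "coeff p (2^j) = a j"
  proof -
    have "coeff p (2^j) = (\<Sum>i<m. if 2^i = (2::nat)^j then a i else 0)"
      unfolding p_def by (simp add: coeff_sum coeff_monom)
    also have "\<dots> = (\<Sum>i<m. if i = j then a i else 0)" by simp
    also have "\<dots> = a j" using j by (simp add: sum.delta)
    finally show ?thesis .
  qed
  have "p = 0"
  proof (rule ccontr)
    assume "p \<noteq> 0"
    have m0: "m > 0" using j by simp
    have dg: "degree p \<le> 2^(m-1)"
      unfolding p_def
    proof (rule degree_sum_le)
      fix i assume "i \<in> {..<m}"
      hence "(2::nat)^i \<le> 2^(m-1)" by (intro power_increasing) auto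
      thus "degree (monom (a i) (2 ^ i)) \<le> 2^(m-1)" using degree_monom_le order_trans by blast
    qed simp
    have "K \<subseteq> {x. poly p x = 0}" using h ev by auto
    hence "card K \<le> card {x. poly p x = 0}" by (intro card_mono) auto
    also have "\<dots> \<le> degree p" by (rule card_poly_roots_bound[OF \<open>p \<noteq> 0\<close>])
    finally have "2^m \<le> (2::nat)^(m-1)" using c dg by linarith
    moreover have "(2::nat)^(m-1) < 2^m" using m0 by simp
    ultimately show False by linarith
  qed
  thus ?thesis using co by simp
qed

lemma card_Fq:
  fixes q :: nat
  assumes c2: "(2::'a::{field,finite}) = 0" and q: "q = 2^m" and card: "card (UNIV::'a set) = q^2"
  shows "q \<le> card {x::'a. x^q = x}"
proof -
  let ?K = "{x::'a. x^q = x}"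
  define T where "T = (\<lambda>y::'a. y^q + y)"
  have Tadd: "T (y + z) = T y + T z" for y z
    unfolding T_def q by (simp add: c2_pow2_add[OF c2] algebra_simps)
  have Tin: "T y \<in> ?K" for y
  proof -
    have "(T y)^q = y^(q*q) + y^q" unfolding T_def q by (simp add: c2_pow2_add[OF c2] power_mult)
    also have "y^(q*q) = y" using fermat_card[of y] card by (simp add: power2_eq_square)
    finally show ?thesis unfolding T_def by (simp add: add.commute)
  qed
  define r where "r = (\<lambda>z. SOME w. T w = z)"
  have rT: "T (r (T y)) = T y" for y unfolding r_def by (rule someI_ex) blast
  define \<phi> where "\<phi> = (\<lambda>y. (T y, y + r (T y)))"
  have "inj \<phi>"
  proof (rule injI)
    fix y1 y2 assume "\<phi> y1 = \<phi> y2"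
    hence "T y1 = T y2" "y1 + r (T y1) = y2 + r (T y2)" unfolding \<phi>_def by auto
    thus "y1 = y2" by simp
  qed
  moreover have "\<phi> ` UNIV \<subseteq> ?K \<times> ?K"
  proof (rule image_subsetI)
    fix y
    have "T (y + r (T y)) = T y + T y" by (simp add: Tadd rT)
    hence "T (y + r (T y)) = 0" by (simp add: c2_add_self[OF c2])
    hence "(y + r (T y))^q = y + r (T y)" unfolding T_def
      by (metis add_eq_0_iff c2_minus[OF c2])
    thus "\<phi> y \<in> ?K \<times> ?K" unfolding \<phi>_def using Tin by simp
  qed
  ultimately have "card (UNIV::'a set) \<le> card (?K \<times> ?K)"
    by (intro card_inj_on_le) auto
  hence "q^2 \<le> (card ?K)^2" using card by (simp add: card_cartesian_product power2_eq_square)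
  thus ?thesis by (simp add: power2_le_iff_abs_le) 
qed



lemma main_part1:
  fixes m q :: nat and b \<delta> :: "'a::{field,finite}"
  assumes m0: "m > 0" and q: "q = 2 ^ m" and card: "card (UNIV::'a set) = q ^ 2"
    and bq: "b ^ q = b" and b0: "b \<noteq> 0"
    and dq: "\<delta> ^ q \<noteq> \<delta>"
    and bij: "bij (\<lambda>x::'a. b * (x ^ q + x + \<delta>) ^ (2 * q + 3) + x)"
    and \<tau>: "\<tau> = trq q \<delta>" and A: "A = b * \<tau>" and B: "B = b * \<delta> ^ (2 * q + 2) * \<tau>"
    and C: "C = \<tau>^2" and D: "D = 1 / A"
    and M: "M = (\<lambda>t::'a. t^4 + C*t^2 + D*t)"
    and U: "U = (\<lambda>t::'a. b * (t + \<delta>)^(2*q+3))"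
    and Tr: "Tr = (\<lambda>y::'a. y^q + y)"
    and Fq: "Fq = {x::'a. x^q = x}"
  shows "(2::'a) = 0" "\<And>x y::'a. (x + y)^q = x^q + y^q" "C^q = C" "D^q = D" "D \<noteq> 0" "A \<noteq> 0" "A * D = 1"
     "\<And>x. Tr (b * (x ^ q + x + \<delta>) ^ (2 * q + 3) + x) = A * M (Tr x) + B"
     "\<And>x. b * (x ^ q + x + \<delta>) ^ (2 * q + 3) + x = U (Tr x) + x"
     "\<And>x. Tr x \<in> Fq"
     "M ` Fq = Fq" "2^m \<le> card Fq"
proof -
  have c2: "(2::'a) = 0"
    using char2_of_card[of "2*m"] card m0 q by (simp add: power_mult[symmetric] mult.commute)
  show "(2::'a) = 0" by (rule c2)
  have qadd: "(x + y)^q = x^q + y^q" for x y :: 'a using c2_pow2_add[OF c2] q by simp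
  show "\<And>x y::'a. (x + y)^q = x^q + y^q" by (rule qadd)
  have qq: "(x^q)^q = x" for x :: 'a
    using fermat_card[of x] card by (simp add: power_mult[symmetric] power2_eq_square)
  have q0: "q > 0" using q by simp
  have neg: "- x = x" for x :: 'a by (rule c2_minus[OF c2])
  have dbl: "x + x = 0" for x :: 'a by (rule c2_add_self[OF c2])
  have \<tau>e: "\<tau> = \<delta> + \<delta>^q" unfolding \<tau> trq_def by simp
  have \<tau>q: "\<tau>^q = \<tau>" unfolding \<tau>e qadd qq by simp
  have \<tau>0: "\<tau> \<noteq> 0"
  proof
    assume "\<tau> = 0"
    hence "\<delta>^q = - \<delta>" unfolding \<tau>e by (simp add: add_eq_0_iff)
    thus False using dq neg by simp
  qed
  have Aq: "A^q = A" unfolding A by (simp add: power_mult_distrib bq \<tau>q)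
  have A0: "A \<noteq> 0" unfolding A using b0 \<tau>0 by simp
  show "A \<noteq> 0" by (rule A0)
  show "C^q = C" unfolding C by (simp add: power_mult[symmetric] mult.commute) (simp add: power_mult \<tau>q)
  show "D^q = D" unfolding D by (simp add: power_one_over Aq)
  show "D \<noteq> 0" unfolding D using A0 by simp
  have AD: "A * D = 1" unfolding D using A0 by simp
  show "A * D = 1" by (rule AD)
  have KU: "Tr (U t) = A * M t + t + B" if ht: "t^q = t" for t
  proof -
    define u where "u = t + \<delta>"
    have uq: "u^q = t + \<delta>^q" unfolding u_def qadd ht ..
    have p1: "u^(2*q+3) = (u^q)^2 * u^3"
      by (simp add: power_add power_mult[symmetric] mult.commute)
    have p2: "(u^(2*q+3))^q = u^2 * (u^q)^3"
    proof -
      have "(u^(2*q+3))^q = ((u^q)^q)^2 * (u^q)^3"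
        unfolding p1 by (simp add: power_mult_distrib power_mult[symmetric] ac_simps)
      thus ?thesis by (simp add: qq)
    qed
    have "Tr (U t) = b * ((u^q)^2 * u^2) * (u + u^q)"
      unfolding Tr U u_def[symmetric] power_mult_distrib bq p2 p1 by (simp add: algebra_simps power3_eq_cube power2_eq_square qq)
    also have "u + u^q = \<tau>"
    proof -
      have "u + u^q = (t + t) + (\<delta> + \<delta>^q)" unfolding uq by (simp add: u_def algebra_simps)
      thus ?thesis unfolding \<tau>e dbl by simp
    qed
    also have "(u^q)^2 * u^2 = (t^2 + t*\<tau> + \<delta>^q*\<delta>)^2"
    proof -
      have "(u^q)^2 * u^2 = (u^q * u)^2" by (simp add: power_mult_distrib)
      also have "u^q * u = t^2 + t*\<tau> + \<delta>^q*\<delta>" unfolding uq unfolding u_def \<tau>e by (simp add: algebra_simps power2_eq_square)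
      finally show ?thesis .
    qed
    also have "(t^2 + t*\<tau> + \<delta>^q*\<delta>)^2 = t^4 + C * t^2 + \<delta>^(2*q+2)"
    proof -
      have "(t^2 + t*\<tau> + \<delta>^q*\<delta>)^2 = (t^2)^2 + (t*\<tau>)^2 + (\<delta>^q*\<delta>)^2"
        by (simp add: c2_sq_add[OF c2])
      also have "\<dots> = t^4 + C * t^2 + \<delta>^(2*q+2)"
      proof -
        have e1: "(t^2)^2 = t^4" by (simp add: power_mult[symmetric])
        have e2: "(\<delta>^q*\<delta>)^2 = \<delta>^(2*q+2)"
          by (simp only: power_mult_distrib power_add power_mult[symmetric] mult.commute[of q 2])
        have e3: "(t*\<tau>)^2 = C * t^2" unfolding C by (simp add: power_mult_distrib mult.commute)
        show ?thesis by (simp only: e1 e2 e3)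
      qed
      finally show ?thesis .
    qed
    finally have "Tr (U t) = A * t^4 + A * C * t^2 + B" unfolding A B by (simp add: algebra_simps)
    moreover have "A * M t + t + B = A * t^4 + A * C * t^2 + B + (A * D * t + t)"
      unfolding M by (simp add: algebra_simps)
    moreover have "A * D * t + t = 0" using AD dbl by simp
    ultimately show ?thesis by simp
  qed
  have Tradd: "Tr (x + y) = Tr x + Tr y" for x y unfolding Tr qadd by (simp add: algebra_simps)
  have TrF: "(Tr y)^q = Tr y" for y unfolding Tr qadd qq by (simp add: add.commute)
  show TrFq: "\<And>x. Tr x \<in> Fq" unfolding Fq using TrF by simp
  have Pe: "b * (x ^ q + x + \<delta>) ^ (2 * q + 3) + x = U (Tr x) + x" for x unfolding U Tr by simp
  show "\<And>x. b * (x ^ q + x + \<delta>) ^ (2 * q + 3) + x = U (Tr x) + x" by (rule Pe)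
  have TrP: "Tr (b * (x ^ q + x + \<delta>) ^ (2 * q + 3) + x) = A * M (Tr x) + B" for x
  proof -
    have "Tr (b * (x ^ q + x + \<delta>) ^ (2 * q + 3) + x) = Tr (U (Tr x)) + Tr x" unfolding Pe Tradd ..
    also have "\<dots> = A * M (Tr x) + B + (Tr x + Tr x)" using KU[OF TrF] by (simp add: algebra_simps)
    finally show ?thesis using dbl by simp
  qed
  show "\<And>x. Tr (b * (x ^ q + x + \<delta>) ^ (2 * q + 3) + x) = A * M (Tr x) + B" by (rule TrP)
  have Madd: "M (x + y) = M x + M y" for x y
  proof -
    have "(x+y)^4 = x^4 + y^4" using c2_pow2_add[OF c2, of x y 2] by simp
    moreover have "(x+y)^2 = x^2 + y^2" by (rule c2_sq_add[OF c2])
    ultimately show ?thesis unfolding M by (simp add: algebra_simps)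
  qed
  have M0: "M 0 = 0" unfolding M by simp
  have MF: "(M t)^q = M t" if "t^q = t" for t
  proof -
    have "(M t)^q = (t^q)^4 + C^q * (t^q)^2 + D^q * t^q"
      unfolding M qadd by (simp add: power_mult_distrib power_mult[symmetric] mult.commute)
    thus ?thesis using that \<open>C^q = C\<close> \<open>D^q = D\<close> unfolding M by simp
  qed
  have inj: "inj_on M Fq"
  proof (rule inj_onI, rule ccontr)
    fix t1 t2 assume h1: "t1 \<in> Fq" and h2: "t2 \<in> Fq" and eq: "M t1 = M t2" and ne: "t1 \<noteq> t2"
    define t' where "t' = t1 + t2"
    have t'q: "t'^q = t'" using h1 h2 unfolding t'_def Fq qadd by simp
    have t'0: "t' \<noteq> 0"
    proof
      assume "t' = 0" hence "t1 = - t2" unfolding t'_def by (simp add: add_eq_0_iff)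
      thus False using ne neg by simp
    qed
    have Mt': "M t' = 0" unfolding t'_def Madd eq dbl ..
    define x' where "x' = U 0 + U t'"
    have Tx': "Tr x' = t'"
    proof -
      have "Tr x' = (A * M 0 + 0 + B) + (A * M t' + t' + B)" unfolding x'_def Tradd
        using KU[of 0] KU[OF t'q] q0 by simp
      also have "\<dots> = t' + (B + B)" unfolding M0 Mt' by (simp add: algebra_simps)
      finally show ?thesis using dbl by simp
    qed
    have "b * (x' ^ q + x' + \<delta>) ^ (2 * q + 3) + x' = U t' + (U 0 + U t')" unfolding Pe Tx' by (simp add: x'_def)
    also have "\<dots> = U 0 + (U t' + U t')" by (simp add: algebra_simps)
    also have "\<dots> = b * (0 ^ q + 0 + \<delta>) ^ (2 * q + 3) + 0" using q0 c2 unfolding U by (simp add: zero_power)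
    finally have "x' = 0" using bij unfolding bij_def inj_def by blast
    hence "Tr x' = 0" unfolding Tr using q0 by simp
    thus False using Tx' t'0 by simp
  qed
  have fin: "finite Fq" by simp
  have sub: "M ` Fq \<subseteq> Fq" using MF unfolding Fq by auto
  show "M ` Fq = Fq" by (rule endo_inj_surj[OF fin sub inj])
  show "2^m \<le> card Fq" using card_Fq[OF c2 q card] unfolding Fq q by simp
qed



lemma main_part2:
  fixes C D A :: "'a::{field,finite}" and m :: nat
  assumes c2: "(2::'a) = 0" and m0: "m > 0" and Cq: "C^(2^m) = C" and Dq: "D^(2^m) = D"
    and D0: "D \<noteq> 0" and AD: "A * D = 1"
    and M: "M = (\<lambda>t::'a. t^4 + C*t^2 + D*t)"
    and Fq: "Fq = {x::'a. x^(2^m) = x}"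
    and Ms: "M ` Fq = Fq" and cardF: "2^m \<le> card Fq"
    and t: "t \<in> Fq"
  shows "(\<Sum>i<m. (D ^ (2 ^ i) * (Sseq C D (m - 1 - i)) ^ (2 ^ (i + 1))
                  + D powi (1 - 2 ^ i) * Sseq C D (i + 1)) * (A * M t)^(2^i)) = t"
proof -
  let ?S = "Sseq C D"
  have neg: "- x = x" for x :: 'a by (rule c2_minus[OF c2])
  have dbl: "x + x = 0" for x :: 'a by (rule c2_add_self[OF c2])
  have A0: "A \<noteq> 0" using AD by auto
  define a where "a = ?S (m+1)"
  define cc where "cc = ?S m"
  define dd where "dd = D * ?S (m-1)^2"
  define e where "e = a + dd"
  define hc where "hc = (\<lambda>i. (1 + a) * ?S (m-1-i)^(2^(i+1)) + cc * ?S (m-i)^(2^(i+1)))"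
  have mm: "m - 1 + 1 = m" "m - 1 + 2 = m + 1" using m0 by simp_all
  (* Casoratian determinant *)
  have Q: "a * ?S (m-1)^2 + cc * cc^2 = D^(2^m - 2)"
  proof -
    have hF: "?S (n+2+1) = C^(2^(1+n)) * ?S (n+1+1) + D^(2^(1+n)) * ?S (n+1)" for n
    proof -
      have "n+2+1 = Suc (Suc (n+1))" "n+1+1 = Suc (n+1)" "1+n = n+1" by simp_all
      then show ?thesis by (simp only:) (rule Sseq.simps(3))
    qed
    have hG: "?S (n+2)^2 = C^(2^(1+n)) * ?S (n+1)^2 + D^(2^(1+n)) * ?S n^2" for n
      using Sseq_pow[OF c2, of C D n 1] by simp
    have "?S (m-1+1+1) * ?S (m-1)^2 + ?S (m-1+1) * ?S (m-1+1)^2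
        = D^(2^1 * (2^(m-1) - 1)) * (?S (1+1) * ?S 0^2 + ?S (0+1) * ?S 1^2)"
      by (rule casor[OF c2, where F = "\<lambda>n. ?S (n+1)" and G = "\<lambda>n. ?S n^2", OF hF hG])
    moreover have "(2::nat)^1 * (2^(m-1) - 1) = 2^m - 2"
    proof -
      have "(2::nat)^m = 2 * 2^(m-1)" using m0 by (cases m) simp_all
      thus ?thesis by simp
    qed
    ultimately show ?thesis unfolding a_def cc_def using mm by simp
  qed
  have Dm: "D * D^(2^m - 2) = 1"
  proof -
    have "(2::nat) \<le> 2^m" using m0 by (cases m) simp_all
    hence "(2::nat)^m = (2^m - 2) + 2" by simp
    hence "D^(2^m) = D^(2^m - 2) * D^2" by (simp only: power_add[symmetric])
    hence "D^(2^m - 2) * D * D = D^(2^m)" by (simp add: power2_eq_square mult.assoc)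
    hence "(D * D^(2^m - 2)) * D = 1 * D" using Dq by (simp add: ac_simps)
    thus ?thesis using D0 by simp
  qed
  have det: "a * dd + cc * (D * cc^2) = 1"
  proof -
    have "a * dd + cc * (D * cc^2) = D * (a * ?S (m-1)^2 + cc * cc^2)" unfolding dd_def by (simp add: algebra_simps)
    thus ?thesis using Q Dm by simp
  qed
  have tq: "x^(2^m) = x" if "x \<in> Fq" for x using that Fq by simp
  have Eq1: "x = cc * x^2 + dd * x + Gs C D (M x) (m-1)" if "x \<in> Fq" for x
  proof -
    have "x^(2^(m-1+1)) = ?S (m-1+1) * x^2 + D * ?S (m-1)^2 * x + Gs C D (M x) (m-1)"
      by (rule yiter[OF c2]) (simp add: M)
    thus ?thesis using tq[OF that] mm unfolding cc_def dd_def by simp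
  qed
  have Eq2: "x^2 = a * x^2 + (D * cc^2) * x + Gs C D (M x) m" if "x \<in> Fq" for x
  proof -
    have "x^(2^(m+1)) = ?S (m+1) * x^2 + D * ?S m^2 * x + Gs C D (M x) m"
      by (rule yiter[OF c2]) (simp add: M)
    moreover have "x^(2^(m+1)) = x^2" using tq[OF that] by (simp add: power_mult mult.commute[of 2])
    ultimately show ?thesis unfolding a_def cc_def by simp
  qed
  have comb: "e * x = (1 + a) * Gs C D (M x) (m-1) + cc * Gs C D (M x) m" if "x \<in> Fq" for x
  proof -
    let ?G1 = "Gs C D (M x) (m-1)" and ?G2 = "Gs C D (M x) m"
    have g: "?G1 = x - cc*x^2 - dd*x" "?G2 = x^2 - a*x^2 - (D*cc^2)*x"
      using Eq1[OF that] Eq2[OF that] by (simp_all add: algebra_simps)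
    have "(1 + a) * ?G1 + cc * ?G2 = e*x + (1 - (a*dd+cc*(D*cc^2)))*x - 2*(dd*x + a*cc*x^2)"
      unfolding g e_def by (simp add: algebra_simps power2_eq_square)
    thus ?thesis using c2 det by simp
  qed
  have Hform: "(1 + a) * Gs C D s (m-1) + cc * Gs C D s m = (\<Sum>i<m. hc i * s^(2^i))" for s
  proof -
    have "Gs C D s (m-1) = (\<Sum>i<m. s^(2^i) * ?S (m-1-i)^(2^(i+1)))"
    proof -
      have "m = Suc (m-1)" using m0 by simp
      hence "(\<Sum>i<m. s^(2^i) * ?S (m-1-i)^(2^(i+1))) = (\<Sum>i<m-1. s^(2^i) * ?S (m-1-i)^(2^(i+1))) + s^(2^(m-1)) * ?S 0 ^(2^(m-1+1))"
        by (subst \<open>m = Suc (m-1)\<close>, subst sum.lessThan_Suc) simp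
      thus ?thesis unfolding Gs_def by simp
    qed
    moreover have "Gs C D s m = (\<Sum>i<m. s^(2^i) * ?S (m-i)^(2^(i+1)))" unfolding Gs_def ..
    ultimately show ?thesis unfolding hc_def
      by (simp add: sum_distrib_left sum.distrib[symmetric] algebra_simps)
  qed
  have main: "e * x = (\<Sum>i<m. hc i * (M x)^(2^i))" if "x \<in> Fq" for x
    using comb[OF that] Hform by simp
  have e0: "e \<noteq> 0"
  proof
    assume e: "e = 0"
    have z: "(\<Sum>i<m. hc i * s^(2^i)) = 0" if "s \<in> Fq" for s
    proof -
      from that Ms obtain x where "x \<in> Fq" "s = M x" by blast
      thus ?thesis using main e by simp
    qed
    have "hc (m-1) = 0" by (rule root_bound[OF z cardF]) (use m0 in simp_all)
    hence c0: "cc = 0" unfolding hc_def using m0 by (simp add: power_0_left)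
    show False
    proof (cases "m = 1")
      case True thus False using c0 unfolding cc_def by simp
    next
      case False
      hence m2: "m \<ge> 2" using m0 by simp
      have "hc (m-2) = 0" by (rule root_bound[OF z cardF]) (use m2 in simp_all)
      moreover have "m - 1 - (m-2) = 1" "m - (m-2) = 2" using m2 by simp_all
      ultimately have "1 + a = 0" unfolding hc_def c0 by simp
      hence "a = - 1" by (simp add: eq_neg_iff_add_eq_0 add.commute)
      hence a1: "a = 1" using neg by simp
      have z2: "(\<Sum>i<m. ?S (m-i)^(2^(i+1)) * s^(2^i)) = 0" if "s \<in> Fq" for s
      proof -
        from that Ms obtain x where x: "x \<in> Fq" "s = M x" by blast
        have "Gs C D (M x) m = 0" using Eq2[OF x(1)] a1 c0 by simp
        thus ?thesis unfolding Gs_def x(2) by (simp add: mult.commute)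
      qed
      have "?S (m-(m-1))^(2^(m-1+1)) = 0" by (rule root_bound[OF z2 cardF]) (use m0 in simp_all)
      thus False using m0 by simp
    qed
  qed
  have esq: "e^2 = e"
  proof -
    have a2: "a^2 = C * cc^2 + D * ?S (m-1)^2"
    proof -
      have "?S (m-1+2)^(2^1) = C^(2^(1+(m-1))) * ?S (m-1+1)^(2^1) + D^(2^(1+(m-1))) * ?S (m-1)^(2^1)"
        by (rule Sseq_pow[OF c2])
      moreover have "1 + (m-1) = m" using m0 by simp
      ultimately show ?thesis unfolding a_def cc_def using mm Cq Dq by simp
    qed
    have fr: "a = C * cc^2 + D^2 * ?S (m-1)^4"
      using front[OF c2, of C D "m-1"] mm unfolding a_def cc_def by simp
    have "e^2 = a^2 + dd^2" unfolding e_def by (rule c2_sq_add[OF c2])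
    also have "dd^2 = D^2 * ?S (m-1)^4" unfolding dd_def by (simp add: power_mult_distrib power_mult[symmetric])
    finally have "e^2 = C * cc^2 + dd + D^2 * ?S (m-1)^4" unfolding a2 dd_def by simp
    also have "C * cc^2 = a - D^2 * ?S (m-1)^4" using fr by simp
    finally show ?thesis unfolding e_def by simp
  qed
  have e1: "e = 1"
  proof -
    have "e * e = e * 1" using esq by (simp add: power2_eq_square)
    thus ?thesis using e0 by simp
  qed
  have coef: "(D ^ (2 ^ i) * (?S (m - 1 - i)) ^ (2 ^ (i + 1)) + D powi (1 - 2 ^ i) * ?S (i + 1)) * A^(2^i) = hc i"
    if i: "i < m" for i
  proof -
    let ?X = "?S (m-1-i)^(2^(i+1))" and ?Y = "?S (m-i)^(2^(i+1))"
    define E1 where "E1 = (2::nat)^(i+1) * (2^(m-1-i) - 1)"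
    have Kc: "a * ?X + cc * ?Y = D^E1 * ?S (i+1)"
    proof -
      have hF: "?S (i+1+(n+2)) = C^(2^(i+1+n)) * ?S (i+1+(n+1)) + D^(2^(i+1+n)) * ?S (i+1+n)" for n
      proof -
        have "i+1+(n+2) = Suc (Suc (i+1+n))" "i+1+(n+1) = Suc (i+1+n)" by simp_all
        then show ?thesis by (simp only:) (rule Sseq.simps(3))
      qed
      have hG: "?S (n+2)^(2^(i+1)) = C^(2^(i+1+n)) * ?S (n+1)^(2^(i+1)) + D^(2^(i+1+n)) * ?S n^(2^(i+1))" for n
        by (rule Sseq_pow[OF c2])
      have "?S (i+1+(m-1-i+1)) * ?S (m-1-i)^(2^(i+1)) + ?S (i+1+(m-1-i)) * ?S (m-1-i+1)^(2^(i+1))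
          = D^(2^(i+1) * (2^(m-1-i) - 1)) * (?S (i+1+1) * ?S 0^(2^(i+1)) + ?S (i+1+0) * ?S 1^(2^(i+1)))"
        by (rule casor[OF c2, where F = "\<lambda>n. ?S (i+1+n)" and G = "\<lambda>n. ?S n^(2^(i+1))", OF hF hG])
      moreover have "i+1+(m-1-i+1) = m+1" "i+1+(m-1-i) = m" "m-1-i+1 = m-i" using i by simp_all
      ultimately show ?thesis unfolding a_def cc_def E1_def by simp
    qed
    have pw: "D powi (1 - 2^i) = A^(2^i - 1)"
    proof (cases "i = 0")
      case True thus ?thesis by simp
    next
      case False
      hence "(1::int) - 2^i < 0" by simp
      hence "D powi (1 - 2^i) = inverse D ^ nat (2^i - 1)" unfolding power_int_def by simp
      moreover have "nat ((2::int)^i - 1) = 2^i - 1" by (simp add: nat_diff_distrib nat_power_eq)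
      moreover have "inverse D = A" by (rule inverse_unique) (simp add: AD mult.commute)
      ultimately show ?thesis by simp
    qed
    have DA: "D^(2^i) * A^(2^i) = 1"
    proof -
      have "D^(2^i) * A^(2^i) = (A*D)^(2^i)" by (simp add: power_mult_distrib mult.commute)
      thus ?thesis using AD by simp
    qed
    have ex: "A^(2^i - 1) * A^(2^i) = A^(2^(i+1) - 1)"
    proof -
      have "(2::nat)^i - 1 + 2^i = 2^(i+1) - 1" using one_le_power[of 2 i] by simp
      moreover have "A^(2^i - 1) * A^(2^i) = A^(2^i - 1 + 2^i)" by (simp only: power_add)
      ultimately show ?thesis by simp
    qed
    have DE: "D^E1 = A^(2^(i+1) - 1)"
    proof -
      have "E1 + 2^(i+1) = 2^m"
      proof -
        have "(2::nat)^(i+1) * 2^(m-1-i) = 2^m" proof -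
          have "i+1+(m-1-i) = m" using i by simp
          moreover have "(2::nat)^(i+1) * 2^(m-1-i) = 2^(i+1+(m-1-i))" by (simp only: power_add)
          ultimately show ?thesis by simp
        qed
        moreover have "(2::nat)^(i+1) \<le> 2^m" using i by (intro power_increasing) simp_all
        ultimately show ?thesis unfolding E1_def by (simp add: diff_mult_distrib2)
      qed
      hence "D^E1 * D^(2^(i+1)) = D^(2^m)" by (simp only: power_add[symmetric])
      hence "D^E1 * D^(2^(i+1)) = D" using Dq by simp
      moreover have "A^(2^(i+1) - 1) * D^(2^(i+1)) = D"
      proof -
        have "(2::nat)^(i+1) = (2^(i+1) - 1) + 1" by simp
        hence "D^(2^(i+1)) = D^(2^(i+1) - 1) * D^1" by (simp only: power_add[symmetric])
        hence "D^(2^(i+1)) = D^(2^(i+1) - 1) * D" by simp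
        hence "A^(2^(i+1) - 1) * D^(2^(i+1)) = (A * D)^(2^(i+1) - 1) * D" by (simp add: power_mult_distrib mult.assoc)
        thus ?thesis using AD by simp
      qed
      ultimately have "D^E1 * D^(2^(i+1)) = A^(2^(i+1) - 1) * D^(2^(i+1))" by simp
      thus ?thesis using D0 by simp
    qed
    have "(D ^ (2 ^ i) * ?X + D powi (1 - 2 ^ i) * ?S (i + 1)) * A^(2^i)
        = (D^(2^i) * A^(2^i)) * ?X + (A^(2^i - 1) * A^(2^i)) * ?S (i+1)" unfolding pw by (simp add: algebra_simps)
    also have "\<dots> = ?X + D^E1 * ?S (i+1)" unfolding DA ex DE by simp
    also have "\<dots> = hc i" unfolding hc_def Kc[symmetric] by (simp add: algebra_simps)
    finally show ?thesis .
  qed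
  have "(\<Sum>i<m. (D ^ (2 ^ i) * (?S (m - 1 - i)) ^ (2 ^ (i + 1)) + D powi (1 - 2 ^ i) * ?S (i + 1)) * (A * M t)^(2^i))
      = (\<Sum>i<m. hc i * (M t)^(2^i))"
  proof (rule sum.cong[OF refl])
    fix i assume "i \<in> {..<m}"
    thus "(D ^ (2 ^ i) * (?S (m - 1 - i)) ^ (2 ^ (i + 1)) + D powi (1 - 2 ^ i) * ?S (i + 1)) * (A * M t)^(2^i)
       = hc i * (M t)^(2^i)" using coef[of i] by (simp add: power_mult_distrib mult.assoc[symmetric])
  qed
  also have "\<dots> = t" using main[OF t] e1 by simp
  finally show ?thesis .
qed



theorem theorem3p12:
  fixes m q :: nat and b \<delta> :: "'a::{field,finite}"
  assumes "m > 0" and "q = 2 ^ m" and "card (UNIV::'a set) = q ^ 2"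
    and "b ^ q = b" and "b \<noteq> 0"
    and "\<delta> ^ q \<noteq> \<delta>"
    and "bij (\<lambda>x::'a. b * (x ^ q + x + \<delta>) ^ (2 * q + 3) + x)"
  shows "let A = b * trq q \<delta>; B = b * \<delta> ^ (2 * q + 2) * trq q \<delta>;
             C = (trq q \<delta>) ^ 2; D = 1 / A;
             P = (\<lambda>x::'a. b * (x ^ q + x + \<delta>) ^ (2 * q + 3) + x);
             Pinv = (\<lambda>x::'a. x + b * (\<delta> + (\<Sum>i<m.
                 (D ^ (2 ^ i) * (Sseq C D (m - 1 - i)) ^ (2 ^ (i + 1))
                  + D powi (1 - 2 ^ i) * Sseq C D (i + 1)) * (x ^ q + x + B) ^ (2 ^ i))) ^ (2 * q + 3))
         in (\<forall>c. P (Pinv c) = c) \<and> (\<forall>c. Pinv (P c) = c)"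
proof -
  note as = assms
  define \<tau> where "\<tau> = trq q \<delta>"
  define A where "A = b * \<tau>"
  define B where "B = b * \<delta> ^ (2 * q + 2) * \<tau>"
  define C where "C = \<tau>^2"
  define D where "D = 1 / A"
  define M where "M = (\<lambda>t::'a. t^4 + C*t^2 + D*t)"
  define U where "U = (\<lambda>t::'a. b * (t + \<delta>)^(2*q+3))"
  define Tr where "Tr = (\<lambda>y::'a. y^q + y)"
  define Fq where "Fq = {x::'a. x^q = x}"
  define P where "P = (\<lambda>x::'a. b * (x ^ q + x + \<delta>) ^ (2 * q + 3) + x)"
  define Pinv where "Pinv = (\<lambda>x::'a. x + b * (\<delta> + (\<Sum>i<m.
                 (D ^ (2 ^ i) * (Sseq C D (m - 1 - i)) ^ (2 ^ (i + 1))
                  + D powi (1 - 2 ^ i) * Sseq C D (i + 1)) * (x ^ q + x + B) ^ (2 ^ i))) ^ (2 * q + 3))"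
  note p1 = main_part1[OF as \<tau>_def A_def B_def C_def D_def M_def U_def Tr_def Fq_def]
  have c2: "(2::'a) = 0" by (rule p1(1))
  have dbl: "x + x = 0" for x :: 'a by (rule c2_add_self[OF c2])
  have Fq': "Fq = {x::'a. x^(2^m) = x}" unfolding Fq_def using as(2) by simp
  have Cq: "C^(2^m) = C" using p1(3) as(2) by simp
  have Dq: "D^(2^m) = D" using p1(4) as(2) by simp
  have left: "Pinv (P x) = x" for x
  proof -
    define t where "t = Tr x"
    have tF: "t \<in> Fq" unfolding t_def by (rule p1(10))
    have "(P x)^q + P x + B = Tr (P x) + B" unfolding Tr_def by simp
    also have "\<dots> = A * M t + (B + B)" unfolding P_def p1(8) t_def by (simp add: algebra_simps)
    finally have e1: "(P x)^q + P x + B = A * M t" using dbl by simp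
    have e2: "(\<Sum>i<m. (D ^ (2 ^ i) * (Sseq C D (m - 1 - i)) ^ (2 ^ (i + 1))
                  + D powi (1 - 2 ^ i) * Sseq C D (i + 1)) * (A * M t)^(2^i)) = t"
      by (rule main_part2[OF c2 as(1) Cq Dq p1(5) p1(7) M_def Fq' _ _ tF])
        (use p1(11) p1(12) in simp_all)
    have "Pinv (P x) = P x + U t" unfolding Pinv_def e1 e2 U_def by (simp add: add.commute)
    also have "P x + U t = x"
    proof -
      have "P x = U t + x" unfolding P_def t_def by (rule p1(9))
      hence "P x + U t = x + (U t + U t)" by (simp add: algebra_simps)
      thus ?thesis using dbl by simp
    qed
    finally show ?thesis .
  qed
  have right: "P (Pinv y) = y" for y
  proof -
    obtain x where "y = P x" using as(7) unfolding P_def bij_def surj_def by blast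
    thus ?thesis using left by simp
  qed
  show ?thesis unfolding Let_def
    using left right unfolding P_def Pinv_def D_def C_def B_def A_def \<tau>_def by simp
qed


end
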